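(* If the starvation number of an SCS with $n$ robots is $s$, then the $s$-resilience of the system is $n-s$.
   Context: Let $T=\{C_1,\dots,C_n\}$ be pairwise disjoint unit circles in the plane (trajectories) and $\epsilon<0.5$ a communication range. The graph of potential links $G_\epsilon(T)$ has the circle centers as nodes and an edge $\{i,j\}$ whenever the centers of $C_i,C_j$ are at distance at most $2+\epsilon$; it is assumed connected. Points of a circle are identified with angles (modulo $2\pi$), and a robot traverses a circle in one time unit. A schedule is a pair $(f,g)$, $f:T\to[0,2\pi)$, $g:T\to\{-1,1\}$ ($1$ = counterclockwise); the robot on $C_i$ is at angle $f(C_i)+2\pi g(C_i)t$ at time $t$. A communication graph $G=(V,E)$ is a connected spanning subgraph of $G_\epsilon(T)$. The link position $\phi_{ij}$ is the point of $C_i$ closest to $C_j$. A schedule is $G$-synchronized if for every $\{i,j\}\in E$ the robot on $C_i$ is at $\phi_{ij}$ exactly when the robot on $C_j$ is at $\phi_{ji}$. An SCS with communication graph $G$ consists of $n$ robots, one per circle, moving under a $G$-synchronized schedule with $g(C_i)=-g(C_j)$ for all $\{i,j\}\in E$. Shifting protocol: when a robot on $C_i$ reaches $\phi_{ij}$ and there is no robot at $\phi_{ji}$, it moves to $C_j$ and thereafter follows the schedule of $C_j$. A partial SCS is obtained by removing some robots, the rest applying the shifting protocol. A surviving robot starves if every time it arrives at a link position the corresponding neighbor is absent. The $k$-resilience ($k\ge1$) is the minimum number of robots whose removal may cause at least $k$ surviving robots to starve ($\infty$ if impossible). The starvation number is the maximum possible number of starving robots in a partial SCS obtained from the SCS.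 *)

theory Defs
  imports "HOL-Analysis.Analysis" "HOL-Library.Extended_Nat"
begin

(* Circles C_0,...,C_{n-1}: unit circles with centres c i (complex plane).
   The point of C_i with angle a is  c i + cis a. *)

definition potential_edges :: "(nat \<Rightarrow> complex) \<Rightarrow> nat \<Rightarrow> real \<Rightarrow> nat set set" where
  "potential_edges c n eps = {{i,j} | i j. i < n \<and> j < n \<and> i \<noteq> j \<and> dist (c i) (c j) \<le> 2 + eps}"

definition graph_connected :: "nat \<Rightarrow> nat set set \<Rightarrow> bool" where
  "graph_connected n E \<longleftrightarrow>
     (\<forall>i<n. \<forall>j<n. (i, j) \<in> {(a, b). {a, b} \<in> E}\<^sup>*)"

definition at_link :: "(nat \<Rightarrow> complex) \<Rightarrow> nat \<Rightarrow> nat \<Rightarrow> real \<Rightarrow> bool" where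
  "at_link c i j a \<longleftrightarrow>
     (\<forall>\<theta>. infdist (c i + cis a) (sphere (c j) 1) \<le> infdist (c i + cis \<theta>) (sphere (c j) 1))"

definition sched :: "(nat \<Rightarrow> real) \<Rightarrow> (nat \<Rightarrow> int) \<Rightarrow> nat \<Rightarrow> real \<Rightarrow> real" where
  "sched f g i t = f i + 2 * pi * real_of_int (g i) * t"

definition synchronized ::
  "(nat \<Rightarrow> complex) \<Rightarrow> nat set set \<Rightarrow> (nat \<Rightarrow> real) \<Rightarrow> (nat \<Rightarrow> int) \<Rightarrow> bool" where
  "synchronized c E f g \<longleftrightarrow>
     (\<forall>i j. {i, j} \<in> E \<longrightarrow>
        (\<forall>t::real. at_link c i j (sched f g i t) \<longleftrightarrow> at_link c j i (sched f g j t)))"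

definition SCS ::
  "(nat \<Rightarrow> complex) \<Rightarrow> nat \<Rightarrow> real \<Rightarrow> nat set set \<Rightarrow> (nat \<Rightarrow> real) \<Rightarrow> (nat \<Rightarrow> int) \<Rightarrow> bool" where
  "SCS c n eps E f g \<longleftrightarrow>
     0 < eps \<and> eps < 1/2 \<and>
     (\<forall>i<n. \<forall>j<n. i \<noteq> j \<longrightarrow> sphere (c i) 1 \<inter> sphere (c j) 1 = {}) \<and>
     graph_connected n (potential_edges c n eps) \<and>
     E \<subseteq> potential_edges c n eps \<and> graph_connected n E \<and>
     (\<forall>i<n. 0 \<le> f i \<and> f i < 2 * pi \<and> (g i = 1 \<or> g i = -1)) \<and>
     synchronized c E f g \<and>
     (\<forall>i j. {i, j} \<in> E \<longrightarrow> g i = - g j)"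

definition before :: "(nat \<Rightarrow> real \<Rightarrow> nat) \<Rightarrow> nat \<Rightarrow> real \<Rightarrow> nat \<Rightarrow> bool" where
  "before pos r t p \<longleftrightarrow> (\<exists>\<delta>>0. \<forall>s. t - \<delta> < s \<and> s < t \<longrightarrow> pos r s = p)"

definition shift_cond ::
  "(nat \<Rightarrow> complex) \<Rightarrow> nat set set \<Rightarrow> (nat \<Rightarrow> real) \<Rightarrow> (nat \<Rightarrow> int) \<Rightarrow> nat set
     \<Rightarrow> (nat \<Rightarrow> nat) \<Rightarrow> real \<Rightarrow> nat \<Rightarrow> nat \<Rightarrow> bool" where
  "shift_cond c E f g S b t i j \<longleftrightarrow>
     {i, j} \<in> E \<and> at_link c i j (sched f g i t) \<and>
     \<not> (\<exists>r'\<in>S. b r' = j \<and> at_link c j i (sched f g j t))"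

(* pos r t = index of the circle robot r is on at time t (robot r starts on C_r);
   S = surviving robots.  pos is right-continuous, has left limits, equals r for t < 0,
   and at every time t >= 0 each robot applies the shifting protocol. *)
definition execution ::
  "(nat \<Rightarrow> complex) \<Rightarrow> nat set set \<Rightarrow> (nat \<Rightarrow> real) \<Rightarrow> (nat \<Rightarrow> int) \<Rightarrow> nat set
     \<Rightarrow> (nat \<Rightarrow> real \<Rightarrow> nat) \<Rightarrow> bool" where
  "execution c E f g S pos \<longleftrightarrow>
     (\<forall>r\<in>S. \<forall>t<0. pos r t = r) \<and>
     (\<forall>r\<in>S. \<forall>t. \<exists>\<delta>>0. \<forall>s. t \<le> s \<and> s < t + \<delta> \<longrightarrow> pos r s = pos r t) \<and>
     (\<forall>t\<ge>0. \<exists>b. (\<forall>r\<in>S. before pos r t (b r)) \<and>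
        (\<forall>r\<in>S. if (\<exists>j. shift_cond c E f g S b t (b r) j)
                 then shift_cond c E f g S b t (b r) (pos r t)
                 else pos r t = b r))"

definition starves ::
  "(nat \<Rightarrow> complex) \<Rightarrow> nat set set \<Rightarrow> (nat \<Rightarrow> real) \<Rightarrow> (nat \<Rightarrow> int) \<Rightarrow> nat set
     \<Rightarrow> (nat \<Rightarrow> real \<Rightarrow> nat) \<Rightarrow> nat \<Rightarrow> bool" where
  "starves c E f g S pos r \<longleftrightarrow>
     (\<forall>t\<ge>0. \<forall>i j. before pos r t i \<and> {i, j} \<in> E \<and> at_link c i j (sched f g i t) \<longrightarrow>
        \<not> (\<exists>r'\<in>S. before pos r' t j \<and> at_link c j i (sched f g j t)))"

definition starving_counts ::
  "(nat \<Rightarrow> complex) \<Rightarrow> nat \<Rightarrow> nat set set \<Rightarrow> (nat \<Rightarrow> real) \<Rightarrow> (nat \<Rightarrow> int) \<Rightarrow> nat set \<Rightarrow> nat set" where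
  "starving_counts c n E f g R =
     {card {r \<in> {..<n} - R. starves c E f g ({..<n} - R) pos r} | pos.
        execution c E f g ({..<n} - R) pos}"

definition starvation_number ::
  "(nat \<Rightarrow> complex) \<Rightarrow> nat \<Rightarrow> nat set set \<Rightarrow> (nat \<Rightarrow> real) \<Rightarrow> (nat \<Rightarrow> int) \<Rightarrow> nat" where
  "starvation_number c n E f g = Max (\<Union>R\<in>Pow {..<n}. starving_counts c n E f g R)"

definition resilience ::
  "(nat \<Rightarrow> complex) \<Rightarrow> nat \<Rightarrow> nat set set \<Rightarrow> (nat \<Rightarrow> real) \<Rightarrow> (nat \<Rightarrow> int) \<Rightarrow> nat \<Rightarrow> enat" where
  "resilience c n E f g k =
     Inf {enat (card R) | R. R \<subseteq> {..<n} \<and> (\<exists>m\<in>starving_counts c n E f g R. k \<le> m)}"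

end

theory Submission
  imports Defs
begin

lemma sep_gt2:
  fixes p q :: complex
  assumes "sphere p 1 \<inter> sphere q 1 = {}"
  shows "dist p q > 2"
proof (rule ccontr)
  assume "\<not> dist p q > 2"
  hence d2: "cmod (q - p) \<le> 2" by (simp add: dist_norm norm_minus_commute)
  define z where "z = q - p"
  define d where "d = cmod z"
  show False
  proof (cases "d = 0")
    case True
    hence "q = p" by (simp add: d_def z_def)
    hence "p + 1 \<in> sphere p 1 \<inter> sphere q 1" by (simp add: dist_norm)
    thus False using assms by blast
  next
    case False
    hence dpos: "d > 0" by (simp add: d_def)
    have dle: "d \<le> 2" using d2 by (simp add: d_def z_def)
    define h where "h = sqrt (1 - d^2/4)"
    have "d^2 \<le> 2^2" using dle dpos by (intro power_mono) auto
    hence hh: "h^2 = 1 - d^2/4" unfolding h_def by (subst real_sqrt_pow2) auto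
    define v where "v = Complex (d/2) h"
    define x where "x = p + (z / of_real d) * v"
    have nv: "cmod v = 1" unfolding v_def cmod_def using hh by (simp add: power2_eq_square)
    have nv2: "cmod (v - of_real d) = 1" unfolding v_def cmod_def using hh
      by (simp add: power2_eq_square algebra_simps)
    have nz: "cmod (z / of_real d) = 1" using dpos by (simp add: d_def norm_divide)
    have "dist p x = 1" unfolding x_def dist_norm using nv nz
      by (simp only: norm_minus_commute[of p] add_diff_cancel_left' norm_mult)
    moreover have "x - q = (z / of_real d) * (v - of_real d)"
      unfolding x_def z_def using dpos by (simp add: field_simps)
    hence "cmod (x - q) = 1" using nv2 nz by (simp only: norm_mult)
    hence "dist q x = 1" by (simp add: dist_norm norm_minus_commute)
    ultimately have "x \<in> sphere p 1 \<inter> sphere q 1" by simp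
    thus False using assms by blast
  qed
qed


lemma infdist_sphere_ge:
  fixes x c :: complex
  shows "dist x c - 1 \<le> infdist x (sphere c 1)"
proof -
  have ne: "sphere c (1::real) \<noteq> {}" by simp
  have "dist x c - 1 \<le> (INF a\<in>sphere c 1. dist x a)"
  proof (rule cINF_greatest[OF ne])
    fix a assume "a \<in> sphere c 1"
    hence "dist c a = 1" by simp
    moreover have "dist x c \<le> dist x a + dist a c" by (rule dist_triangle)
    ultimately show "dist x c - 1 \<le> dist x a" by (simp add: dist_commute)
  qed
  thus ?thesis using infdist_notempty[OF ne] by simp
qed

lemma sq_expand: "((x::real) - k*p1)^2 + (y - k*p2)^2 = (x^2+y^2) + k^2*(p1^2+p2^2) - 2*k*(x*p1+y*p2)"
  by (simp add: power2_eq_square algebra_simps)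

lemma at_link_dir:
  assumes "dist (c i) (c j) > 2" and "at_link c i j a"
  shows "cis a = (c j - c i) / of_real (dist (c i) (c j))"
proof -
  define w where "w = c j - c i"
  define d where "d = cmod w"
  have dd: "d = dist (c i) (c j)" by (simp add: d_def w_def dist_norm norm_minus_commute)
  have d2: "d > 2" using assms(1) dd by simp
  define \<theta> where "\<theta> = Arg w"
  have wd: "w = of_real d * cis \<theta>" unfolding d_def \<theta>_def using rcis_cmod_Arg[of w] by (simp add: rcis_def)
  have q: "c j - cis \<theta> \<in> sphere (c j) 1" by (simp add: dist_norm)
  have "infdist (c i + cis \<theta>) (sphere (c j) 1) \<le> dist (c i + cis \<theta>) (c j - cis \<theta>)"
    by (rule infdist_le[OF q])
  also have "dist (c i + cis \<theta>) (c j - cis \<theta>) = d - 2"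
  proof -
    have "c i + cis \<theta> - (c j - cis \<theta>) = of_real (2 - d) * cis \<theta>"
      using wd unfolding w_def by (simp add: algebra_simps)
    hence "dist (c i + cis \<theta>) (c j - cis \<theta>) = cmod (of_real (2 - d) * cis \<theta>)" by (simp add: dist_norm)
    also have "\<dots> = d - 2" using d2 by (simp only: norm_mult norm_cis norm_of_real) simp
    finally show ?thesis .
  qed
  finally have A: "infdist (c i + cis \<theta>) (sphere (c j) 1) \<le> d - 2" .
  have "infdist (c i + cis a) (sphere (c j) 1) \<le> infdist (c i + cis \<theta>) (sphere (c j) 1)"
    using assms(2) unfolding at_link_def by blast
  with A infdist_sphere_ge[of "c i + cis a" "c j"]
  have "dist (c i + cis a) (c j) \<le> d - 1" by simp
  moreover have "dist (c i + cis a) (c j) = cmod (cis a - w)" by (simp add: dist_norm w_def algebra_simps)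
  ultimately have B: "cmod (cis a - w) \<le> d - 1" by simp
  have "(cmod (cis a - w))^2 \<le> (d - 1)^2" using B norm_ge_zero power_mono by blast
  moreover have "(cmod (cis a - w))^2 = (cos a - d * cos \<theta>)^2 + (sin a - d * sin \<theta>)^2"
    using wd by (simp add: cmod_power2 cis.code)
  ultimately have C: "(cos a - d * cos \<theta>)^2 + (sin a - d * sin \<theta>)^2 \<le> (d - 1)^2" by simp
  have e1: "(cos a)^2 + (sin a)^2 = 1" by simp
  have e2: "(cos \<theta>)^2 + (sin \<theta>)^2 = 1" by simp
  have "(cos a - d * cos \<theta>)^2 + (sin a - d * sin \<theta>)^2
          = 1 + d^2 - 2*d*(cos a * cos \<theta> + sin a * sin \<theta>)"
    using sq_expand[of "cos a" d "cos \<theta>" "sin a" "sin \<theta>"] e1 e2 by simp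
  with C have "2*d*(cos a * cos \<theta> + sin a * sin \<theta>) \<ge> 2*d"
    by (simp add: power2_eq_square algebra_simps)
  hence P: "cos a * cos \<theta> + sin a * sin \<theta> \<ge> 1" using d2 by simp
  have "(cos a - 1 * cos \<theta>)^2 + (sin a - 1 * sin \<theta>)^2 = 2 - 2*(cos a * cos \<theta> + sin a * sin \<theta>)"
    using sq_expand[of "cos a" 1 "cos \<theta>" "sin a" "sin \<theta>"] e1 e2 by simp
  with P have "(cos a - cos \<theta>)^2 + (sin a - sin \<theta>)^2 \<le> 0" by simp
  hence "(cos a - cos \<theta>)^2 + (sin a - sin \<theta>)^2 = 0"
    by (metis add_nonneg_nonneg antisym zero_le_power2)
  hence "cos a = cos \<theta> \<and> sin a = sin \<theta>" by (simp add: sum_power2_eq_zero_iff)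
  hence "cis a = cis \<theta>" by (simp add: cis.code)
  moreover have "(c j - c i) / of_real d = cis \<theta>" using wd d2 by (simp add: w_def[symmetric])
  ultimately show ?thesis using dd by simp
qed


lemma edge_props:
  assumes "SCS c n eps E f g" "{i,j} \<in> E"
  shows "i < n \<and> j < n \<and> i \<noteq> j \<and> dist (c i) (c j) \<le> 2 + eps \<and> dist (c i) (c j) > 2"
proof -
  have "{i,j} \<in> potential_edges c n eps" using assms unfolding SCS_def by blast
  then obtain a b where ab: "{i,j} = {a,b}" "a < n" "b < n" "a \<noteq> b" "dist (c a) (c b) \<le> 2 + eps"
    unfolding potential_edges_def by blast
  hence "(i = a \<and> j = b) \<or> (i = b \<and> j = a)" by (auto simp: doubleton_eq_iff)
  hence 1: "i < n \<and> j < n \<and> i \<noteq> j \<and> dist (c i) (c j) \<le> 2 + eps"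
    using ab by (auto simp: dist_commute)
  hence "sphere (c i) 1 \<inter> sphere (c j) 1 = {}" using assms(1) unfolding SCS_def by blast
  with 1 show ?thesis using sep_gt2 by blast
qed

lemma edge_sym: "{i,j} \<in> E \<Longrightarrow> {j,i} \<in> E" by (simp add: insert_commute)

lemma link_unique:
  assumes "SCS c n eps E f g" "{i,j} \<in> E" "{i,k} \<in> E" "at_link c i j a" "at_link c i k a"
  shows "j = k"
proof (rule ccontr)
  assume jk: "j \<noteq> k"
  have P1: "i < n \<and> j < n \<and> i \<noteq> j \<and> dist (c i) (c j) \<le> 2 + eps \<and> dist (c i) (c j) > 2"
    using edge_props[OF assms(1,2)] .
  have P2: "i < n \<and> k < n \<and> i \<noteq> k \<and> dist (c i) (c k) \<le> 2 + eps \<and> dist (c i) (c k) > 2"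
    using edge_props[OF assms(1,3)] .
  have eps: "eps < 1/2" using assms(1) unfolding SCS_def by simp
  define dj where "dj = dist (c i) (c j)"
  define dk where "dk = dist (c i) (c k)"
  have "cis a = (c j - c i) / of_real dj" using at_link_dir P1 assms(4) unfolding dj_def by blast
  have "cis a = (c k - c i) / of_real dk" using at_link_dir P2 assms(5) unfolding dk_def by blast
  have nj: "dj \<noteq> 0" "dk \<noteq> 0" using P1 P2 unfolding dj_def dk_def by auto
  have ej: "c j - c i = of_real dj * cis a" using \<open>cis a = (c j - c i) / of_real dj\<close> nj by simp
  have ek: "c k - c i = of_real dk * cis a" using \<open>cis a = (c k - c i) / of_real dk\<close> nj by simp
  have "c j - c k = of_real (dj - dk) * cis a" using ej ek by (simp add: algebra_simps)
  hence "dist (c j) (c k) = cmod (of_real (dj - dk) * cis a)" by (simp add: dist_norm)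
  also have "\<dots> = \<bar>dj - dk\<bar>" by (simp only: norm_mult norm_cis norm_of_real) simp
  also have "\<dots> < 1/2" using P1 P2 eps unfolding dj_def dk_def by linarith
  finally have "dist (c j) (c k) < 1/2" .
  moreover have "sphere (c j) 1 \<inter> sphere (c k) 1 = {}" using assms(1) P1 P2 jk unfolding SCS_def by blast
  ultimately show False using sep_gt2 by fastforce
qed

lemma link_times_int:
  assumes "SCS c n eps E f g" "{i,j} \<in> E"
    "at_link c i j (sched f g i t)" "at_link c i j (sched f g i t')"
  shows "\<exists>k::int. t - t' = of_int k"
proof -
  have P1: "i < n \<and> j < n \<and> i \<noteq> j \<and> dist (c i) (c j) \<le> 2 + eps \<and> dist (c i) (c j) > 2"
    using edge_props[OF assms(1,2)] .
  have gi: "g i = 1 \<or> g i = -1" using assms(1) P1 unfolding SCS_def by blast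
  have "cis (sched f g i t) = cis (sched f g i t')"
    using at_link_dir[OF _ assms(3)] at_link_dir[OF _ assms(4)] P1 by simp
  hence "sin (sched f g i t) = sin (sched f g i t') \<and> cos (sched f g i t) = cos (sched f g i t')"
    by (metis cis.sel)
  then obtain m :: int where m: "sched f g i t = sched f g i t' + 2 * pi * m"
    using sin_cos_eq_iff by blast
  hence "2 * pi * (real_of_int (g i) * (t - t')) = 2 * pi * m"
    unfolding sched_def by (simp add: algebra_simps)
  hence "real_of_int (g i) * (t - t') = m" by simp
  thus ?thesis using gi by (metis mult_minus1 mult_1 of_int_minus of_int_1 minus_diff_eq)
qed

definition linktimes :: "(nat \<Rightarrow> complex) \<Rightarrow> nat set set \<Rightarrow> (nat \<Rightarrow> real) \<Rightarrow> (nat \<Rightarrow> int) \<Rightarrow> real set" where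
  "linktimes c E f g = {t. \<exists>i j. {i,j} \<in> E \<and> at_link c i j (sched f g i t)}"

lemma finite_linktimes:
  assumes "SCS c n eps E f g"
  shows "finite (linktimes c E f g \<inter> {a..b})"
proof -
  define A where "A = (\<lambda>(i,j). {t. {i,j} \<in> E \<and> at_link c i j (sched f g i t)} \<inter> {a..b})"
  have sub: "linktimes c E f g \<inter> {a..b} \<subseteq> (\<Union>p\<in>{..<n}\<times>{..<n}. A p)"
  proof
    fix t assume "t \<in> linktimes c E f g \<inter> {a..b}"
    then obtain i j where ij: "{i,j} \<in> E" "at_link c i j (sched f g i t)" "t \<in> {a..b}"
      unfolding linktimes_def by blast
    hence "i < n" "j < n" using edge_props[OF assms ij(1)] by auto
    thus "t \<in> (\<Union>p\<in>{..<n}\<times>{..<n}. A p)" using ij unfolding A_def by force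
  qed
  have "finite (A p)" for p
  proof -
    obtain i j where p: "p = (i,j)" by force
    have "inj_on floor (A p)"
    proof (rule inj_onI)
      fix x y assume x: "x \<in> A p" and y: "y \<in> A p" and fl: "floor x = floor y"
      from x y have "{i,j} \<in> E" "at_link c i j (sched f g i x)" "at_link c i j (sched f g i y)"
        unfolding A_def p by auto
      then obtain k :: int where k: "x - y = of_int k" using link_times_int[OF assms] by blast
      have "\<bar>x - y\<bar> < 1" using fl by linarith
      hence "of_int \<bar>k\<bar> < (1::real)" using k by simp
      hence "\<bar>k\<bar> < 1" by (simp only: of_int_less_1_iff)
      hence "k = 0" by simp
      thus "x = y" using k by simp
    qed
    moreover have "floor ` A p \<subseteq> {floor a..floor b}" unfolding A_def p by (auto intro: floor_mono)
    ultimately show ?thesis using finite_subset[of "floor ` A p"] finite_imageD by blast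
  qed
  hence "finite (\<Union>p\<in>{..<n}\<times>{..<n}. A p)" by blast
  thus ?thesis using sub finite_subset by blast
qed


lemma linktimes_isolated:
  assumes "SCS c n eps E f g"
  shows "\<exists>\<delta>>0. \<forall>x\<in>linktimes c E f g. x \<noteq> t \<longrightarrow> \<delta> \<le> \<bar>x - t\<bar>"
proof -
  define F where "F = linktimes c E f g \<inter> {t-1..t+1}"
  have "finite F" unfolding F_def by (rule finite_linktimes[OF assms])
  then obtain d where d: "d > 0" "\<forall>x\<in>F. x \<noteq> t \<longrightarrow> d \<le> dist t x"
    using finite_set_avoid[of F t] by blast
  show ?thesis
  proof (intro exI[of _ "min d 1"] conjI ballI impI)
    show "0 < min d 1" using d by simp
    fix x assume x: "x \<in> linktimes c E f g" "x \<noteq> t"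
    show "min d 1 \<le> \<bar>x - t\<bar>"
    proof (cases "x \<in> {t-1..t+1}")
      case True
      hence "d \<le> dist t x" using d x unfolding F_def by blast
      thus ?thesis by (simp add: dist_real_def abs_minus_commute)
    next
      case False thus ?thesis by auto
    qed
  qed
qed

lemma before_unique: "before pos r t p \<Longrightarrow> before pos r t q \<Longrightarrow> p = q"
proof -
  assume "before pos r t p" "before pos r t q"
  then obtain d1 d2 where d: "d1 > 0" "\<forall>s. t - d1 < s \<and> s < t \<longrightarrow> pos r s = p"
    "d2 > 0" "\<forall>s. t - d2 < s \<and> s < t \<longrightarrow> pos r s = q" unfolding before_def by blast
  define s where "s = t - min d1 d2 / 2"
  have s: "t - d1 < s" "t - d2 < s" "s < t" using d(1,3) unfolding s_def by (auto simp: min_def)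
  have "pos r s = p" using d(2) s by blast
  moreover have "pos r s = q" using d(4) s by blast
  ultimately show "p = q" by simp
qed

lemma restrict_execution:
  assumes ex: "execution c E f g S pos" and XS: "X \<subseteq> S"
    and st: "\<forall>r\<in>X. starves c E f g S pos r"
  shows "execution c E f g X pos \<and> (\<forall>r\<in>X. starves c E f g X pos r)"
proof
  show "\<forall>r\<in>X. starves c E f g X pos r"
    using st XS unfolding starves_def by blast
  have 1: "\<forall>r\<in>X. \<forall>t<0. pos r t = r" and 2: "\<forall>r\<in>X. \<forall>t. \<exists>\<delta>>0. \<forall>s. t \<le> s \<and> s < t + \<delta> \<longrightarrow> pos r s = pos r t"
    using ex XS unfolding execution_def by blast+
  have 3: "\<exists>b. (\<forall>r\<in>X. before pos r t (b r)) \<and>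
        (\<forall>r\<in>X. if (\<exists>j. shift_cond c E f g X b t (b r) j)
                 then shift_cond c E f g X b t (b r) (pos r t)
                 else pos r t = b r)" if t: "t \<ge> 0" for t
  proof -
    obtain b where b: "\<forall>r\<in>S. before pos r t (b r)"
      "\<forall>r\<in>S. if (\<exists>j. shift_cond c E f g S b t (b r) j)
                 then shift_cond c E f g S b t (b r) (pos r t)
                 else pos r t = b r" using ex t unfolding execution_def by blast
    have mono: "shift_cond c E f g S b t i j \<Longrightarrow> shift_cond c E f g X b t i j" for i j
      using XS unfolding shift_cond_def by blast
    show ?thesis
    proof (intro exI[of _ b] conjI ballI)
      fix r assume r: "r \<in> X"
      show "before pos r t (b r)" using b r XS by blast
      have bk: "shift_cond c E f g X b t (b r) j \<Longrightarrow> shift_cond c E f g S b t (b r) j" for j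
      proof -
        assume sc: "shift_cond c E f g X b t (b r) j"
        have "before pos r t (b r)" using b r XS by blast
        hence "\<not> (\<exists>r'\<in>S. before pos r' t j \<and> at_link c j (b r) (sched f g j t))"
          using st r t sc unfolding starves_def shift_cond_def by blast
        thus ?thesis using sc b(1) unfolding shift_cond_def by blast
      qed
      show "if (\<exists>j. shift_cond c E f g X b t (b r) j)
                 then shift_cond c E f g X b t (b r) (pos r t)
                 else pos r t = b r"
      proof -
        have br: "if (\<exists>j. shift_cond c E f g S b t (b r) j)
                 then shift_cond c E f g S b t (b r) (pos r t)
                 else pos r t = b r" using b(2) r XS by blast
        have eq: "(\<exists>j. shift_cond c E f g X b t (b r) j) = (\<exists>j. shift_cond c E f g S b t (b r) j)"
          using bk mono by blast
        show ?thesis using br mono unfolding eq by (auto split: if_splits)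
      qed
    qed
  qed
  show "execution c E f g X pos" unfolding execution_def using 1 2 3 by blast
qed


lemma starvesI:
  assumes "\<And>t i j r'. 0 \<le> t \<Longrightarrow> before pos r t i \<and> {i,j} \<in> E \<and> at_link c i j (sched f g i t) \<Longrightarrow>
     r' \<in> S \<Longrightarrow> before pos r' t j \<Longrightarrow> at_link c j i (sched f g j t) \<Longrightarrow> False"
  shows "starves c E f g S pos r"
  unfolding starves_def using assms by blast

definition meets where
  "meets c E f g S pos w t w' \<longleftrightarrow> w' \<in> S \<and> (\<exists>i j. before pos w t i \<and> before pos w' t j \<and> {i,j} \<in> E \<and>
      at_link c i j (sched f g i t) \<and> at_link c j i (sched f g j t))"

definition stepb where
  "stepb c E f g S pos w t = (if \<exists>w'. meets c E f g S pos w t w' then SOME w'. meets c E f g S pos w t w' else w)"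

locale baton =
  fixes c :: "nat \<Rightarrow> complex" and n :: nat and eps :: real and E :: "nat set set"
    and f :: "nat \<Rightarrow> real" and g :: "nat \<Rightarrow> int" and S :: "nat set" and pos :: "nat \<Rightarrow> real \<Rightarrow> nat"
    and u :: nat
  assumes scs: "SCS c n eps E f g"
    and ex: "execution c E f g S pos"
    and uS: "u \<in> S" and uns: "\<not> starves c E f g S pos u"
begin

abbreviation "L \<equiv> linktimes c E f g"
abbreviation "X \<equiv> {r \<in> S. starves c E f g S pos r}"
abbreviation "st \<equiv> stepb c E f g S pos"

definition sig where "sig t = foldl st u (sorted_list_of_set (L \<inter> {0..t}))"
definition sigl where "sigl t = foldl st u (sorted_list_of_set (L \<inter> {0..<t}))"

lemma finL: "finite (L \<inter> {0..t})" "finite (L \<inter> {0..<t})"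
proof -
  show A: "finite (L \<inter> {0..t})" using finite_linktimes[OF scs, of 0 t] .
  have "L \<inter> {0..<t} \<subseteq> L \<inter> {0..t}" by auto
  thus "finite (L \<inter> {0..<t})" using A finite_subset by blast
qed

lemma meets_L: "meets c E f g S pos w t w' \<Longrightarrow> t \<in> L"
  unfolding meets_def linktimes_def by blast

lemma sig_step: assumes "t \<ge> 0" shows "sig t = st (sigl t) t"
proof (cases "t \<in> L")
  case True
  define xs where "xs = sorted_list_of_set (L \<inter> {0..<t})"
  have xs1: "sorted xs" unfolding xs_def by (rule sorted_sorted_list_of_set)
  have xs2: "distinct xs" unfolding xs_def by (rule distinct_sorted_list_of_set)
  have xs3: "set xs = L \<inter> {0..<t}" unfolding xs_def by (rule set_sorted_list_of_set[OF finL(2)])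
  define ys where "ys = sorted_list_of_set (L \<inter> {0..t})"
  have ys1: "sorted ys" unfolding ys_def by (rule sorted_sorted_list_of_set)
  have ys2: "distinct ys" unfolding ys_def by (rule distinct_sorted_list_of_set)
  have ys3: "set ys = L \<inter> {0..t}" unfolding ys_def by (rule set_sorted_list_of_set[OF finL(1)])
  have a1: "sorted (xs @ [t])" using xs1 xs3 by (simp add: sorted_append less_imp_le)
  have a2: "distinct (xs @ [t])" using xs2 xs3 by simp
  have a3: "set (xs @ [t]) = set ys" using xs3 ys3 True assms by auto
  have "ys = xs @ [t]" using sorted_distinct_set_unique[OF ys1 ys2 a1 a2 a3[symmetric]] .
  thus ?thesis unfolding sig_def sigl_def xs_def ys_def by simp
next
  case False
  have "L \<inter> {0..t} = L \<inter> {0..<t}"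
  proof (intro set_eqI iffI)
    fix x assume "x \<in> L \<inter> {0..t}"
    moreover hence "x \<noteq> t" using False by blast
    ultimately show "x \<in> L \<inter> {0..<t}" by simp
  qed simp
  moreover have "\<not> (\<exists>w'. meets c E f g S pos (sigl t) t w')" using False meets_L by blast
  hence "st (sigl t) t = sigl t" unfolding stepb_def by (rule if_not_P)
  ultimately show ?thesis unfolding sig_def sigl_def by simp
qed

lemma sig_right: "\<exists>\<delta>>0. \<forall>s. t \<le> s \<and> s < t + \<delta> \<longrightarrow> sig s = sig t"
proof -
  obtain d where d: "d > 0" "\<forall>x\<in>L. x \<noteq> t \<longrightarrow> d \<le> \<bar>x - t\<bar>" using linktimes_isolated[OF scs] by blast
  have EQ: "L \<inter> {0..s} = L \<inter> {0..t}" if "t \<le> s" "s < t + d" for s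
  proof -
    have "x \<le> t" if "x \<in> L" "x \<le> s" for x
    proof (rule ccontr)
      assume "\<not> x \<le> t"
      hence "d \<le> \<bar>x - t\<bar>" using d that by auto
      thus False using \<open>\<not> x \<le> t\<close> that \<open>s < t + d\<close> by auto
    qed
    thus ?thesis using \<open>t \<le> s\<close> by auto
  qed
  show ?thesis
  proof (intro exI[of _ d] conjI allI impI)
    fix s assume "t \<le> s \<and> s < t + d"
    hence "L \<inter> {0..s} = L \<inter> {0..t}" using EQ by blast
    thus "sig s = sig t" unfolding sig_def by simp
  qed (use d in simp)
qed

lemma sigl_left: "\<exists>\<delta>>0. \<forall>s. t - \<delta> < s \<and> s < t \<longrightarrow> sig s = sigl t"
proof -
  obtain d where d: "d > 0" "\<forall>x\<in>L. x \<noteq> t \<longrightarrow> d \<le> \<bar>x - t\<bar>" using linktimes_isolated[OF scs] by blast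
  have EQ: "L \<inter> {0..s} = L \<inter> {0..<t}" if "t - d < s" "s < t" for s
  proof -
    have "x \<le> s" if "x \<in> L" "x < t" for x
    proof (rule ccontr)
      assume "\<not> x \<le> s"
      hence "d \<le> \<bar>x - t\<bar>" using d that by auto
      thus False using \<open>\<not> x \<le> s\<close> that \<open>t - d < s\<close> by auto
    qed
    thus ?thesis using \<open>s < t\<close> by auto
  qed
  show ?thesis
  proof (intro exI[of _ d] conjI allI impI)
    fix s assume "t - d < s \<and> s < t"
    hence "L \<inter> {0..s} = L \<inter> {0..<t}" using EQ by blast
    thus "sig s = sigl t" unfolding sig_def sigl_def by simp
  qed (use d in simp)
qed

lemma sig_neg: "t < 0 \<Longrightarrow> sig t = u"
proof -
  assume "t < 0"
  hence "L \<inter> {0..t} = {}" by auto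
  thus ?thesis unfolding sig_def by simp
qed

lemma step_inv: assumes "w \<in> S - X" "\<tau> \<ge> 0" shows "st w \<tau> \<in> S - X"
proof (cases "\<exists>w'. meets c E f g S pos w \<tau> w'")
  case True
  define w' where "w' = (SOME w'. meets c E f g S pos w \<tau> w')"
  have m: "meets c E f g S pos w \<tau> w'" unfolding w'_def using True someI_ex by metis
  then obtain i j where ij: "w' \<in> S" "before pos w \<tau> i" "before pos w' \<tau> j" "{i,j} \<in> E"
      "at_link c i j (sched f g i \<tau>)" "at_link c j i (sched f g j \<tau>)" unfolding meets_def by blast
  have "\<not> starves c E f g S pos w'"
    unfolding starves_def using ij assms edge_sym[OF ij(4)] by blast
  moreover have "st w \<tau> = w'" unfolding stepb_def w'_def using True by simp
  ultimately show ?thesis using ij by simp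
next
  case False
  hence "st w \<tau> = w" unfolding stepb_def by (rule if_not_P)
  thus ?thesis using assms by simp
qed

lemma fold_inv: "w \<in> S - X \<Longrightarrow> \<forall>\<tau>\<in>set xs. \<tau> \<ge> 0 \<Longrightarrow> foldl st w xs \<in> S - X"
proof (induction xs arbitrary: w)
  case Nil
  then show ?case by simp
next
  case (Cons a xs)
  have "st w a \<in> S - X" using step_inv[OF Cons.prems(1)] Cons.prems(2) by simp
  then show ?case using Cons.IH Cons.prems(2) by simp
qed

lemma uSX: "u \<in> S - X" using uS uns by simp

lemma sig_SX: "sig t \<in> S - X"
  unfolding sig_def using finL by (intro fold_inv[OF uSX]) auto

lemma sigl_SX: "sigl t \<in> S - X"
  unfolding sigl_def using finL by (intro fold_inv[OF uSX]) auto

definition npos where "npos r t = (if r = u then pos (sig t) t else pos r t)"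

lemma npos_other: "r \<noteq> u \<Longrightarrow> npos r = pos r"
  unfolding npos_def by auto

lemma partner:
  assumes "w \<in> S" "t \<ge> 0" "meets c E f g S pos w t w'"
  shows "\<exists>i j. before pos w t i \<and> before pos w' t j \<and> pos w' t = j \<and> {i,j} \<in> E \<and>
           at_link c i j (sched f g i t) \<and> at_link c j i (sched f g j t)"
proof -
  obtain i j where ij: "w' \<in> S" "before pos w t i" "before pos w' t j" "{i,j} \<in> E"
      "at_link c i j (sched f g i t)" "at_link c j i (sched f g j t)"
    using assms(3) unfolding meets_def by blast
  obtain b where b: "\<forall>r\<in>S. before pos r t (b r)"
      "\<forall>r\<in>S. if (\<exists>j. shift_cond c E f g S b t (b r) j)
                 then shift_cond c E f g S b t (b r) (pos r t)
                 else pos r t = b r" using ex assms(2) unfolding execution_def by blast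
  have bw': "b w' = j" using before_unique b(1) ij(1,3) by blast
  have bw: "b w = i" using before_unique b(1) assms(1) ij(2) by blast
  have "\<not> (\<exists>k. shift_cond c E f g S b t j k)"
  proof
    assume "\<exists>k. shift_cond c E f g S b t j k"
    then obtain k where k: "{j,k} \<in> E" "at_link c j k (sched f g j t)"
      "\<not> (\<exists>r'\<in>S. b r' = k \<and> at_link c k j (sched f g k t))" unfolding shift_cond_def by blast
    have "i = k" using link_unique[OF scs edge_sym[OF ij(4)] k(1) ij(6) k(2)] .
    thus False using k(3) assms(1) bw ij(5) by blast
  qed
  hence "pos w' t = j" using b(2) ij(1) bw' by (metis (no_types, lifting))
  thus ?thesis using ij by blast
qed

lemma before_npos_u:
  assumes "before npos u t p" shows "before pos (sigl t) t p"
proof -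
  obtain d1 where d1: "d1 > 0" "\<forall>s. t - d1 < s \<and> s < t \<longrightarrow> npos u s = p" using assms unfolding before_def by blast
  obtain d2 where d2: "d2 > 0" "\<forall>s. t - d2 < s \<and> s < t \<longrightarrow> sig s = sigl t" using sigl_left by blast
  show ?thesis unfolding before_def
  proof (intro exI[of _ "min d1 d2"] conjI allI impI)
    show "0 < min d1 d2" using d1 d2 by simp
    fix s assume "t - min d1 d2 < s \<and> s < t"
    hence "npos u s = p" "sig s = sigl t" using d1 d2 by auto
    thus "pos (sigl t) s = p" unfolding npos_def by simp
  qed
qed

lemma npos_before_u:
  assumes "before pos (sigl t) t p" shows "before npos u t p"
proof -
  obtain d1 where d1: "d1 > 0" "\<forall>s. t - d1 < s \<and> s < t \<longrightarrow> pos (sigl t) s = p" using assms unfolding before_def by blast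
  obtain d2 where d2: "d2 > 0" "\<forall>s. t - d2 < s \<and> s < t \<longrightarrow> sig s = sigl t" using sigl_left by blast
  show ?thesis unfolding before_def
  proof (intro exI[of _ "min d1 d2"] conjI allI impI)
    show "0 < min d1 d2" using d1 d2 by simp
    fix s assume "t - min d1 d2 < s \<and> s < t"
    hence "pos (sigl t) s = p" "sig s = sigl t" using d1 d2 by auto
    thus "npos u s = p" unfolding npos_def by simp
  qed
qed

lemma branch_transfer:
  assumes "\<forall>k. P' k \<longleftrightarrow> P k" "if (\<exists>j. P j) then P v else v = bi"
  shows "if (\<exists>j. P' j) then P' v else v = bi"
  using assms by (auto split: if_splits)

lemma uX: "u \<notin> X" using uns by simp

lemma brX:
  assumes t: "t \<ge> 0" and b1: "\<forall>r\<in>S. before pos r t (b r)"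
    and b2: "\<forall>r\<in>S. if (\<exists>j. shift_cond c E f g S b t (b r) j)
                 then shift_cond c E f g S b t (b r) (pos r t)
                 else pos r t = b r"
    and rX: "r \<in> X" and b'r: "b' r = b r"
    and occ: "\<And>j. \<exists>r'\<in>insert u X. b' r' = j \<Longrightarrow> \<exists>r'\<in>S. b r' = j"
  shows "if (\<exists>j. shift_cond c E f g (insert u X) b' t (b' r) j)
                 then shift_cond c E f g (insert u X) b' t (b' r) (npos r t)
                 else npos r t = b' r"
proof -
  have rS: "r \<in> S" and rst: "starves c E f g S pos r" using rX by auto
  have ru: "r \<noteq> u" using rX uX by blast
  have fwd: "shift_cond c E f g S b t (b r) k \<Longrightarrow> shift_cond c E f g (insert u X) b' t (b r) k" for k
    using occ unfolding shift_cond_def by blast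
  have bwd: "shift_cond c E f g (insert u X) b' t (b r) k \<Longrightarrow> shift_cond c E f g S b t (b r) k" for k
  proof -
    assume sc: "shift_cond c E f g (insert u X) b' t (b r) k"
    have e: "{b r, k} \<in> E" "at_link c (b r) k (sched f g (b r) t)"
      "\<not> (\<exists>r'\<in>insert u X. b' r' = k \<and> at_link c k (b r) (sched f g k t))"
      using sc unfolding shift_cond_def by auto
    have br: "before pos r t (b r)" using b1 rS by blast
    have "\<not> (\<exists>r'\<in>S. before pos r' t k \<and> at_link c k (b r) (sched f g k t))"
      using rst t br e(1,2) unfolding starves_def by blast
    hence "\<not> (\<exists>r'\<in>S. b r' = k \<and> at_link c k (b r) (sched f g k t))"
      using b1 by blast
    thus ?thesis using e(1,2) unfolding shift_cond_def by blast
  qed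
  have eq: "\<forall>k. shift_cond c E f g (insert u X) b' t (b r) k \<longleftrightarrow> shift_cond c E f g S b t (b r) k"
    using bwd fwd by blast
  have ob: "if (\<exists>j. shift_cond c E f g S b t (b r) j)
                 then shift_cond c E f g S b t (b r) (pos r t)
                 else pos r t = b r" using b2 rS by blast
  show ?thesis unfolding b'r npos_other[OF ru] by (rule branch_transfer[OF eq ob])
qed

lemma bru:
  assumes t: "t \<ge> 0" and b1: "\<forall>r\<in>S. before pos r t (b r)"
    and b2: "\<forall>r\<in>S. if (\<exists>j. shift_cond c E f g S b t (b r) j)
                 then shift_cond c E f g S b t (b r) (pos r t)
                 else pos r t = b r"
    and b'u: "b' u = b (sigl t)"
    and b'X: "\<And>x. x \<in> X \<Longrightarrow> b' x = b x"
  shows "if (\<exists>j. shift_cond c E f g (insert u X) b' t (b' u) j)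
                 then shift_cond c E f g (insert u X) b' t (b' u) (npos u t)
                 else npos u t = b' u"
proof -
  define w where "w = sigl t"
  have wS: "w \<in> S" using sigl_SX unfolding w_def by blast
  have occ: "\<exists>r'\<in>S. b r' = j" if hj: "\<exists>r'\<in>insert u X. b' r' = j" for j
  proof -
    obtain r' where r': "r' \<in> insert u X" "b' r' = j" using hj by blast
    show ?thesis
    proof (cases "r' = u")
      case True
      have "b' u = j" using r'(2) True by simp
      hence "b w = j" using b'u unfolding w_def by simp
      thus ?thesis using wS by blast
    next
      case False
      have rX: "r' \<in> X" using r'(1) False by blast
      have "b r' = j" using r'(2) b'X[OF rX] by simp
      moreover have "r' \<in> S" using rX by simp
      ultimately show ?thesis by blast
    qed
  qed
  have fwd: "shift_cond c E f g S b t i k \<Longrightarrow> shift_cond c E f g (insert u X) b' t i k" for i k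
    using occ unfolding shift_cond_def by blast
  show ?thesis
  proof (cases "\<exists>w'. meets c E f g S pos w t w'")
    case m: True
    define w'' where "w'' = (SOME w'. meets c E f g S pos w t w')"
    have mw: "meets c E f g S pos w t w''" unfolding w''_def using m someI_ex by metis
    have stw: "st w t = w''" unfolding stepb_def w''_def using m by (rule if_P)
    have sig_t: "sig t = w''" using sig_step[OF t] stw unfolding w_def by simp
    obtain i j where ij: "before pos w t i" "before pos w'' t j" "pos w'' t = j" "{i,j} \<in> E"
       "at_link c i j (sched f g i t)" "at_link c j i (sched f g j t)"
      using partner[OF wS t mw] by blast
    have bwi: "b w = i" using before_unique b1 wS ij(1) by blast
    have ne: "i \<noteq> j" using edge_props[OF scs ij(4)] by simp
    have nposu: "npos u t = j" using sig_t ij(3) unfolding npos_def by simp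
    have b'ui: "b' u = i" using b'u bwi unfolding w_def by simp
    have sc: "shift_cond c E f g (insert u X) b' t i j"
      unfolding shift_cond_def
    proof (intro conjI notI)
      show "{i,j} \<in> E" by (rule ij(4))
      show "at_link c i j (sched f g i t)" by (rule ij(5))
      assume "\<exists>r'\<in>insert u X. b' r' = j \<and> at_link c j i (sched f g j t)"
      then obtain r' where r': "r' \<in> insert u X" "b' r' = j" by blast
      show False
      proof (cases "r' = u")
        case True thus False using r' b'ui ne by simp
      next
        case False
        hence x: "r' \<in> X" using r' by blast
        hence xS: "r' \<in> S" and xst: "starves c E f g S pos r'" by auto
        have "b r' = j" using r'(2) b'X[OF x] by simp
        hence bx: "before pos r' t j" using b1 xS by metis
        have "\<not> (\<exists>r''\<in>S. before pos r'' t i \<and> at_link c i j (sched f g i t))"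
          using xst t bx edge_sym[OF ij(4)] ij(6) unfolding starves_def by blast
        thus False using wS ij(1) ij(5) by blast
      qed
    qed
    have "\<exists>k. shift_cond c E f g (insert u X) b' t (b' u) k" using sc b'ui by blast
    moreover have "shift_cond c E f g (insert u X) b' t (b' u) (npos u t)" using sc b'ui nposu by simp
    ultimately show ?thesis by simp
  next
    case nm: False
    have stw: "st w t = w" unfolding stepb_def using nm by (rule if_not_P)
    have sig_t: "sig t = w" using sig_step[OF t] stw unfolding w_def by simp
    have bwd: "shift_cond c E f g (insert u X) b' t (b w) k \<Longrightarrow> shift_cond c E f g S b t (b w) k" for k
    proof (rule ccontr)
      assume sc: "shift_cond c E f g (insert u X) b' t (b w) k"
        and nsc: "\<not> shift_cond c E f g S b t (b w) k"
      have e1: "{b w, k} \<in> E" "at_link c (b w) k (sched f g (b w) t)"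
        using sc unfolding shift_cond_def by auto
      then obtain r' where r': "r' \<in> S" "b r' = k" "at_link c k (b w) (sched f g k t)"
        using nsc unfolding shift_cond_def by blast
      have e2: "before pos w t (b w)" "before pos r' t k" using b1 wS r' by auto
      have "meets c E f g S pos w t r'"
        unfolding meets_def using r'(1,3) e1 e2 by blast
      thus False using nm by blast
    qed
    have eq: "\<forall>k. shift_cond c E f g (insert u X) b' t (b w) k \<longleftrightarrow> shift_cond c E f g S b t (b w) k"
      using bwd fwd by blast
    have ob: "if (\<exists>j. shift_cond c E f g S b t (b w) j)
                 then shift_cond c E f g S b t (b w) (pos w t)
                 else pos w t = b w" using b2 wS by blast
    have np: "npos u t = pos w t" using sig_t unfolding npos_def by simp
    have b'uw: "b' u = b w" using b'u unfolding w_def by simp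
    show ?thesis unfolding b'uw np by (rule branch_transfer[OF eq ob])
  qed
qed

lemma new_exec: "execution c E f g (insert u X) npos"
proof -
  have p1: "\<forall>r\<in>S. \<forall>t<0. pos r t = r" using ex unfolding execution_def by blast
  have E1: "\<forall>r\<in>insert u X. \<forall>t<0. npos r t = r"
  proof (intro ballI allI impI)
    fix r t assume r: "r \<in> insert u X" and t: "(t::real) < 0"
    show "npos r t = r"
    proof (cases "r = u")
      case True
      have "sig t = u" by (rule sig_neg[OF t])
      moreover have "pos u t = u" using p1 uS t by simp
      ultimately show ?thesis using True unfolding npos_def by simp
    next
      case False
      hence "r \<in> S" using r by blast
      hence "pos r t = r" using p1 t by simp
      thus ?thesis using False unfolding npos_def by simp
    qed
  qed
  have p2: "\<forall>r\<in>S. \<forall>t. \<exists>\<delta>>0. \<forall>s. t \<le> s \<and> s < t + \<delta> \<longrightarrow> pos r s = pos r t"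
    using ex unfolding execution_def by blast
  have E2: "\<forall>r\<in>insert u X. \<forall>t. \<exists>\<delta>>0. \<forall>s. t \<le> s \<and> s < t + \<delta> \<longrightarrow> npos r s = npos r t"
  proof (intro ballI allI)
    fix r t assume r: "r \<in> insert u X"
    show "\<exists>\<delta>>0. \<forall>s. t \<le> s \<and> s < t + \<delta> \<longrightarrow> npos r s = npos r t"
    proof (cases "r = u")
      case True
      have "\<exists>\<delta>>0. \<forall>s. t \<le> s \<and> s < t + \<delta> \<longrightarrow> sig s = sig t" by (rule sig_right)
      then obtain d1 where d1c: "d1 > 0 \<and> (\<forall>s. t \<le> s \<and> s < t + d1 \<longrightarrow> sig s = sig t)" by (rule exE)
      hence d1: "d1 > 0" "\<forall>s. t \<le> s \<and> s < t + d1 \<longrightarrow> sig s = sig t" by (rule conjunct1, rule conjunct2)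
      have sS: "sig t \<in> S" using sig_SX by blast
      obtain d2 where d2c: "d2 > 0 \<and> (\<forall>s. t \<le> s \<and> s < t + d2 \<longrightarrow> pos (sig t) s = pos (sig t) t)"
        using spec[OF bspec[OF p2 sS], of t] by (rule exE)
      hence d2: "d2 > 0" "\<forall>s. t \<le> s \<and> s < t + d2 \<longrightarrow> pos (sig t) s = pos (sig t) t" by (rule conjunct1, rule conjunct2)
      show ?thesis
      proof (intro exI[of _ "min d1 d2"] conjI allI impI)
        show "0 < min d1 d2" using d1(1) d2(1) by simp
        fix s assume a: "t \<le> s \<and> s < t + min d1 d2"
        have a1: "t \<le> s" "s < t + d1" "s < t + d2" using a by auto
        have q1: "sig s = sig t" using spec[OF d1(2), of s] a1 by (elim impE) (rule conjI)
        have q2: "pos (sig t) s = pos (sig t) t" using spec[OF d2(2), of s] a1 by (elim impE) (rule conjI)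
        show "npos r s = npos r t" unfolding True npos_def using q1 q2 by simp
      qed
    next
      case False
      hence rS: "r \<in> S" using r by blast
      show ?thesis unfolding npos_other[OF False] by (rule spec[OF bspec[OF p2 rS]])
    qed
  qed
  have E3: "\<exists>b. (\<forall>r\<in>insert u X. before npos r t (b r)) \<and>
        (\<forall>r\<in>insert u X. if (\<exists>j. shift_cond c E f g (insert u X) b t (b r) j)
                 then shift_cond c E f g (insert u X) b t (b r) (npos r t)
                 else npos r t = b r)" if t: "t \<ge> 0" for t
  proof -
    obtain b where b1: "\<forall>r\<in>S. before pos r t (b r)" and b2:
      "\<forall>r\<in>S. if (\<exists>j. shift_cond c E f g S b t (b r) j)
                 then shift_cond c E f g S b t (b r) (pos r t)
                 else pos r t = b r" using ex t unfolding execution_def by blast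
    define b' where "b' = (\<lambda>r. if r = u then b (sigl t) else b r)"
    have b'u: "b' u = b (sigl t)" unfolding b'_def by simp
    have b'X: "b' x = b x" if "x \<in> X" for x using that uX unfolding b'_def by auto
    have wS: "sigl t \<in> S" using sigl_SX by blast
    show ?thesis
    proof (intro exI[of _ b'] conjI ballI)
      fix r assume r: "r \<in> insert u X"
      show "before npos r t (b' r)"
      proof (cases "r = u")
        case True
        have "before pos (sigl t) t (b (sigl t))" using b1 wS by blast
        hence "before npos u t (b (sigl t))" by (rule npos_before_u)
        thus ?thesis using True b'u by simp
      next
        case False
        hence rX: "r \<in> X" using r by blast
        hence "before pos r t (b r)" using b1 by simp
        thus ?thesis using b'X[OF rX] npos_other[OF False] unfolding before_def by simp
      qed
      show "if (\<exists>j. shift_cond c E f g (insert u X) b' t (b' r) j)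
                 then shift_cond c E f g (insert u X) b' t (b' r) (npos r t)
                 else npos r t = b' r"
      proof (cases "r = u")
        case True
        show ?thesis unfolding True by (rule bru[OF t b1 b2 b'u b'X])
      next
        case False
        hence rX: "r \<in> X" using r by blast
        have occ: "\<exists>r'\<in>S. b r' = j" if hj: "\<exists>r'\<in>insert u X. b' r' = j" for j
        proof -
          obtain r' where r': "r' \<in> insert u X" "b' r' = j" using hj by blast
          show ?thesis
          proof (cases "r' = u")
            case True
            hence "b (sigl t) = j" using r'(2) b'u by simp
            thus ?thesis using wS by blast
          next
            case False
            hence r'X: "r' \<in> X" using r'(1) by blast
            hence "b r' = j" using r'(2) b'X[OF r'X] by simp
            moreover have "r' \<in> S" using r'X by simp
            ultimately show ?thesis by blast
          qed
        qed
        show ?thesis by (rule brX[where b=b and b'=b' and t=t and r=r, OF t b1 b2 rX b'X[OF rX] occ])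
      qed
    qed
  qed
  have E3': "\<forall>t\<ge>0. \<exists>b. (\<forall>r\<in>insert u X. before npos r t (b r)) \<and>
        (\<forall>r\<in>insert u X. if (\<exists>j. shift_cond c E f g (insert u X) b t (b r) j)
                 then shift_cond c E f g (insert u X) b t (b r) (npos r t)
                 else npos r t = b r)" by (intro allI impI) (rule E3)
  show ?thesis unfolding execution_def by (rule conjI[OF E1 conjI[OF E2 E3']])
qed

lemma new_starves: "\<forall>r\<in>insert u X. starves c E f g (insert u X) npos r"
proof
  fix r assume r: "r \<in> insert u X"
  have key: False if t: "(0::real) \<le> t" and h: "before npos r t i \<and> {i, j} \<in> E \<and> at_link c i j (sched f g i t)"
     and r': "r' \<in> insert u X" "before npos r' t j" "at_link c j i (sched f g j t)" for t i j r'
  proof -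
    have eij: "{i,j} \<in> E" using h by blast
    have eji: "{j,i} \<in> E" using eij by (simp add: insert_commute)
    have ne: "i \<noteq> j" using edge_props[OF scs eij] by blast
    have wS: "sigl t \<in> S" using sigl_SX by blast
    have bef: "before pos (if q = u then sigl t else q) t p" if "q \<in> insert u X" "before npos q t p" for q p
    proof (cases "q = u")
      case True thus ?thesis using that before_npos_u by simp
    next
      case False thus ?thesis using that npos_other[OF False] unfolding before_def by simp
    qed
    define a where "a = (if r = u then sigl t else r)"
    define a' where "a' = (if r' = u then sigl t else r')"
    have ba: "before pos a t i" unfolding a_def using bef r h by blast
    have ba': "before pos a' t j" unfolding a'_def using bef r'(1,2) by blast
    have aS: "a \<in> S" "a' \<in> S" unfolding a_def a'_def using r r'(1) wS by auto
    show False
    proof (cases "r = u")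
      case True
      show False
      proof (cases "r' = u")
        case True
        hence "a = a'" using \<open>r = u\<close> unfolding a_def a'_def by simp
        hence "i = j" using ba ba' before_unique by metis
        thus False using ne by simp
      next
        case False
        hence x: "r' \<in> X" "a' = r'" using r'(1) unfolding a'_def by auto
        hence "starves c E f g S pos r'" by simp
        hence "\<not> (\<exists>r''\<in>S. before pos r'' t i \<and> at_link c i j (sched f g i t))"
          using t ba' x(2) eji r'(3) unfolding starves_def by blast
        thus False using aS(1) ba h by blast
      qed
    next
      case False
      hence x: "r \<in> X" "a = r" using r unfolding a_def by auto
      hence "starves c E f g S pos r" by simp
      hence "\<not> (\<exists>r''\<in>S. before pos r'' t j \<and> at_link c j i (sched f g j t))"
        using t ba x(2) h unfolding starves_def by blast
      thus False using aS(2) ba' r'(3) by blast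
    qed
  qed
  show "starves c E f g (insert u X) npos r"
    by (rule starvesI) (rule key)
qed

end


lemma exec_empty: "execution c E f g {} pos"
  unfolding execution_def by simp

theorem lemma3:
  fixes c :: "nat \<Rightarrow> complex" and n :: nat and eps :: real and E :: "nat set set"
    and f :: "nat \<Rightarrow> real" and g :: "nat \<Rightarrow> int" and s :: nat
  assumes "SCS c n eps E f g"
    and "starvation_number c n E f g = s"
  shows "resilience c n E f g s = enat (n - s)"
proof -
  note scs = assms(1)
  define U where "U = (\<Union>R\<in>Pow {..<n}. starving_counts c n E f g R)"
  have Usub: "U \<subseteq> {..n}"
  proof
    fix m assume "m \<in> U"
    then obtain R pos where m: "m = card {r \<in> {..<n} - R. starves c E f g ({..<n} - R) pos r}"
      unfolding U_def starving_counts_def by blast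
    have "card {r \<in> {..<n} - R. starves c E f g ({..<n} - R) pos r} \<le> card {..<n}"
      by (rule card_mono) auto
    thus "m \<in> {..n}" using m by simp
  qed
  have finU: "finite U" using Usub finite_subset by blast
  have "0 \<in> starving_counts c n E f g {..<n}"
    unfolding starving_counts_def using exec_empty by fastforce
  hence neU: "U \<noteq> {}" unfolding U_def by blast
  have sU: "s = Max U" using assms(2) unfolding starvation_number_def U_def by simp
  have s_in: "s \<in> U" using Max_in[OF finU neU] sU by simp
  have s_max: "m \<le> s" if "m \<in> U" for m using Max_ge[OF finU that] sU by simp
  define A where "A = {enat (card R) | R. R \<subseteq> {..<n} \<and> (\<exists>m\<in>starving_counts c n E f g R. s \<le> m)}"
  have res: "resilience c n E f g s = Inf A" unfolding resilience_def A_def by simp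
  obtain R0 pos0 where R0: "R0 \<subseteq> {..<n}" "execution c E f g ({..<n} - R0) pos0"
    and s0: "s = card {r \<in> {..<n} - R0. starves c E f g ({..<n} - R0) pos0 r}"
    using s_in unfolding U_def starving_counts_def by blast
  define X0 where "X0 = {r \<in> {..<n} - R0. starves c E f g ({..<n} - R0) pos0 r}"
  have X0sub: "X0 \<subseteq> {..<n} - R0" unfolding X0_def by blast
  have rX: "execution c E f g X0 pos0 \<and> (\<forall>r\<in>X0. starves c E f g X0 pos0 r)"
    by (rule restrict_execution[OF R0(2) X0sub]) (simp add: X0_def)
  define R1 where "R1 = {..<n} - X0"
  have R1c: "{..<n} - R1 = X0" unfolding R1_def using X0sub by blast
  have "card {r \<in> {..<n} - R1. starves c E f g ({..<n} - R1) pos0 r} = s"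
    unfolding R1c using rX s0 X0_def by (metis (no_types, lifting) Collect_mem_eq Collect_cong)
  hence "s \<in> starving_counts c n E f g R1" unfolding starving_counts_def using rX R1c by force
  moreover have "R1 \<subseteq> {..<n}" unfolding R1_def by blast
  ultimately have inA: "enat (card R1) \<in> A" unfolding A_def by blast
  have "card R1 = n - card X0" unfolding R1_def using X0sub
    by (subst card_Diff_subset) (auto intro: finite_subset)
  hence cR1: "card R1 = n - s" using s0 X0_def by simp
  have lower: "enat (n - s) \<le> a" if "a \<in> A" for a
  proof -
    obtain R m where R: "a = enat (card R)" "R \<subseteq> {..<n}" "m \<in> starving_counts c n E f g R" "s \<le> m"
      using \<open>a \<in> A\<close> unfolding A_def by blast
    define S where "S = {..<n} - R"
    obtain pos where pos: "execution c E f g S pos" "m = card {r \<in> S. starves c E f g S pos r}"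
      using R(3) unfolding starving_counts_def S_def by blast
    have "m \<in> U" using R(2,3) unfolding U_def by blast
    hence ms: "m = s" using s_max R(4) by fastforce
    have SX: "S \<subseteq> {r \<in> S. starves c E f g S pos r}"
    proof
      fix u assume uS: "u \<in> S"
      show "u \<in> {r \<in> S. starves c E f g S pos r}"
      proof (rule ccontr)
        assume nu: "u \<notin> {r \<in> S. starves c E f g S pos r}"
        hence uns: "\<not> starves c E f g S pos u" using uS by simp
        interpret B: baton c n eps E f g S pos u
          by unfold_locales (fact scs, fact pos(1), fact uS, fact uns)
        define Y where "Y = insert u {r \<in> S. starves c E f g S pos r}"
        have YS: "Y \<subseteq> {..<n}" unfolding Y_def S_def using uS S_def by auto
        have finY: "finite {r \<in> S. starves c E f g S pos r}" unfolding S_def by simp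
        have cY: "card Y = s + 1" unfolding Y_def using nu finY pos(2) ms by simp
        define R' where "R' = {..<n} - Y"
        have R'c: "{..<n} - R' = Y" unfolding R'_def using YS by blast
        have ex': "execution c E f g Y B.npos" unfolding Y_def by (rule B.new_exec)
        have st': "\<forall>r\<in>Y. starves c E f g Y B.npos r" unfolding Y_def by (rule B.new_starves)
        have "{r \<in> Y. starves c E f g Y B.npos r} = Y" using st' by blast
        hence "card {r \<in> {..<n} - R'. starves c E f g ({..<n} - R') B.npos r} = s + 1"
          unfolding R'c using cY by simp
        hence "s + 1 \<in> starving_counts c n E f g R'"
          unfolding starving_counts_def using ex' R'c by force
        moreover have "R' \<in> Pow {..<n}" unfolding R'_def by blast
        ultimately have "s + 1 \<in> U" unfolding U_def by blast
        thus False using s_max by fastforce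
      qed
    qed
    hence "{r \<in> S. starves c E f g S pos r} = S" by blast
    hence cS: "card S = s" using pos(2) ms by simp
    have "card S = n - card R" unfolding S_def using R(2)
      by (subst card_Diff_subset) (auto intro: finite_subset)
    hence "n - s \<le> card R" using cS by simp
    thus ?thesis using R(1) by simp
  qed
  have "Inf A = enat (n - s)"
  proof (rule antisym)
    show "Inf A \<le> enat (n - s)" using Inf_lower[OF inA] cR1 by simp
    show "enat (n - s) \<le> Inf A" by (rule Inf_greatest) (rule lower)
  qed
  thus ?thesis using res by simp
qed

end
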